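(* Let $d\geq1$, $n\geq1$, $u>d$ and $\vec v=(v_0,\dots,v_{d-1})$ with $u>v_0>\dots>v_{d-1}>0$. A $(\vec v,u)$-dimensional representation of $\mathcal{F}_{d,n}$ is $\vartheta^+$-semistable if and only if it is $\vartheta^+$-stable. Moreover, it is $\vartheta^+$-semistable if and only if the maps $e,A_1,\dots,A_{d-1}$ are all injective.
   Context: Set $V_i=\mathbb{C}^{v_i}$ ($i=0,\dots,d-1$), $U=\mathbb{C}^u$. A $(\vec v,u)$-dimensional representation of $\mathcal{F}_{d,n}$ is a tuple of linear maps $e\colon V_0\to U$, $A_p\colon V_p\to V_{p-1}$ ($p=1,\dots,d-1$), and, when $n\geq2$, $f_q\colon U\to V_0$ and $B_{pq}\colon V_{p-1}\to V_p$ ($p=1,\dots,d-1$, $q=1,\dots,n-1$), satisfying for $n\geq2$ and every $q$: if $d=1$, $f_qe=0$; if $d\geq2$, $A_1B_{1q}+f_qe=0$ on $V_0$, $A_{p+1}B_{p+1,q}=B_{pq}A_p$ on $V_p$ for $1\leq p\leq d-2$, and $B_{d-1,q}A_{d-1}=0$ on $V_{d-1}$. (For $n=1$ there are no $f_q,B_{pq}$ and no relations.) Stability: fix a basis $\varepsilon_1,\dots,\varepsilon_u$ of $U$, coordinate maps $\varphi_l\colon U\to\mathbb{C}$ and $\psi_l\colon\mathbb{C}\to U$, $\psi_l(1)=\varepsilon_l$. Associate the representation on $V\oplus\mathbb{C}$ (extra vertex $\infty$ with $V_\infty=\mathbb{C}$) with maps $\tilde e_l=\varphi_l\circ e\colon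 V_0\to\mathbb{C}$, $\tilde f_{ql}=f_q\circ\psi_l\colon\mathbb{C}\to V_0$, and the $A_p,B_{pq}$. A subrepresentation is a collection of subspaces $S_i\subset V_i$, $S_\infty\subset\mathbb{C}$ preserved by all these maps; put $s_i=\dim S_i$. With $\vartheta^+=(1,\dots,1)\in\mathbb{R}^d$, the representation is $\vartheta^+$-semistable (resp. stable) if every proper nontrivial subrepresentation satisfies $\sum_i s_i\leq(\sum_i v_i)s_\infty$ (resp. strict inequality). *)

theory Defs
  imports "Jordan_Normal_Form.VS_Connect"
begin

text \<open>Vectors of C^k are elements of carrier_vec k (type complex vec); linear maps
  C^a \<rightarrow> C^b are matrices in carrier_mat b a acting by mult_mat_vec.\<close>

definition cspace :: "nat \<Rightarrow> (complex, complex vec) module" where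
  "cspace k = module_vec TYPE(complex) k"

definition is_subspace :: "nat \<Rightarrow> complex vec set \<Rightarrow> bool" where
  "is_subspace k S \<longleftrightarrow> VectorSpace.subspace class_ring S (cspace k)"

definition sdim :: "nat \<Rightarrow> complex vec set \<Rightarrow> nat" where
  "sdim k S = vectorspace.dim class_ring ((cspace k)\<lparr>carrier := S\<rparr>)"

definition is_rep_F ::
  "nat \<Rightarrow> nat \<Rightarrow> (nat \<Rightarrow> nat) \<Rightarrow> nat \<Rightarrow> complex mat \<Rightarrow> (nat \<Rightarrow> complex mat)
    \<Rightarrow> (nat \<Rightarrow> complex mat) \<Rightarrow> (nat \<Rightarrow> nat \<Rightarrow> complex mat) \<Rightarrow> bool" where
  "is_rep_F d n v u e A f B \<longleftrightarrow>
     e \<in> carrier_mat u (v 0) \<and>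
     (\<forall>p\<in>{1..d-1}. A p \<in> carrier_mat (v (p-1)) (v p)) \<and>
     (\<forall>q\<in>{1..n-1}. f q \<in> carrier_mat (v 0) u) \<and>
     (\<forall>p\<in>{1..d-1}. \<forall>q\<in>{1..n-1}. B p q \<in> carrier_mat (v p) (v (p-1))) \<and>
     (\<forall>q\<in>{1..n-1}.
        (d = 1 \<longrightarrow> f q * e = 0\<^sub>m (v 0) (v 0)) \<and>
        (d \<ge> 2 \<longrightarrow>
           A 1 * B 1 q + f q * e = 0\<^sub>m (v 0) (v 0) \<and>
           (\<forall>p\<in>{1..d-2}. A (p+1) * B (p+1) q = B p q * A p) \<and>
           B (d-1) q * A (d-1) = 0\<^sub>m (v (d-1)) (v (d-1))))"

text \<open>Maps of the associated representation on V \<oplus> C (vertex \<infinity>, V_\<infinity> = C = C^1):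
  etilde l = \<phi>_l \<circ> e : V_0 \<rightarrow> C, ftilde q l = f_q \<circ> \<psi>_l : C \<rightarrow> V_0.\<close>
definition etilde :: "nat \<Rightarrow> complex mat \<Rightarrow> nat \<Rightarrow> complex mat" where
  "etilde v0 e l = mat_of_rows v0 [row e l]"

definition ftilde :: "nat \<Rightarrow> (nat \<Rightarrow> complex mat) \<Rightarrow> nat \<Rightarrow> nat \<Rightarrow> complex mat" where
  "ftilde v0 f q l = mat_of_cols v0 [col (f q) l]"

definition is_subrep ::
  "nat \<Rightarrow> nat \<Rightarrow> (nat \<Rightarrow> nat) \<Rightarrow> nat \<Rightarrow> complex mat \<Rightarrow> (nat \<Rightarrow> complex mat)
    \<Rightarrow> (nat \<Rightarrow> complex mat) \<Rightarrow> (nat \<Rightarrow> nat \<Rightarrow> complex mat)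
    \<Rightarrow> (nat \<Rightarrow> complex vec set) \<Rightarrow> complex vec set \<Rightarrow> bool" where
  "is_subrep d n v u e A f B S Sinf \<longleftrightarrow>
     (\<forall>i<d. is_subspace (v i) (S i)) \<and> is_subspace 1 Sinf \<and>
     (\<forall>l<u. \<forall>x\<in>S 0. etilde (v 0) e l *\<^sub>v x \<in> Sinf) \<and>
     (\<forall>q\<in>{1..n-1}. \<forall>l<u. \<forall>y\<in>Sinf. ftilde (v 0) f q l *\<^sub>v y \<in> S 0) \<and>
     (\<forall>p\<in>{1..d-1}. \<forall>x\<in>S p. A p *\<^sub>v x \<in> S (p-1)) \<and>
     (\<forall>p\<in>{1..d-1}. \<forall>q\<in>{1..n-1}. \<forall>x\<in>S (p-1). B p q *\<^sub>v x \<in> S p)"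

definition proper_nontrivial ::
  "nat \<Rightarrow> (nat \<Rightarrow> nat) \<Rightarrow> (nat \<Rightarrow> complex vec set) \<Rightarrow> complex vec set \<Rightarrow> bool" where
  "proper_nontrivial d v S Sinf \<longleftrightarrow>
     \<not> ((\<forall>i<d. S i = {0\<^sub>v (v i)}) \<and> Sinf = {0\<^sub>v 1}) \<and>
     \<not> ((\<forall>i<d. S i = carrier_vec (v i)) \<and> Sinf = carrier_vec 1)"

definition theta_semistable where
  "theta_semistable d n v u e A f B \<longleftrightarrow>
     (\<forall>S Sinf. is_subrep d n v u e A f B S Sinf \<and> proper_nontrivial d v S Sinf \<longrightarrow>
        (\<Sum>i<d. sdim (v i) (S i)) \<le> (\<Sum>i<d. v i) * sdim 1 Sinf)"

definition theta_stable where
  "theta_stable d n v u e A f B \<longleftrightarrow>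
     (\<forall>S Sinf. is_subrep d n v u e A f B S Sinf \<and> proper_nontrivial d v S Sinf \<longrightarrow>
        (\<Sum>i<d. sdim (v i) (S i)) < (\<Sum>i<d. v i) * sdim 1 Sinf)"

end

theory Submission
  imports Defs
begin

lemma (in vectorspace) subspace_basis:
  assumes fd: fin_dim and X: "subspace K X V"
  shows "\<exists>b. finite b \<and> b \<subseteq> X \<and> lin_indpt b \<and> span b = X \<and> vectorspace.dim K (vs X) = card b"
proof -
  interpret W: vectorspace K "vs X" using subspace_is_vs[OF X] .
  have XV: "X \<subseteq> carrier V" using X unfolding subspace_def submodule_def by auto
  have sm: "submodule K X V" using X by simp
  let ?P = "\<lambda>S. S \<subseteq> carrier (vs X) \<and> W.lin_indpt S"
  have bnd: "finite S \<and> card S \<le> dim" if "?P S" for S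
  proof -
    have SX: "S \<subseteq> X" using that by simp
    have "lin_indpt S" using that span_li_not_depend(2)[OF SX sm] by simp
    then show ?thesis using li_le_dim[OF fd] SX XV by blast
  qed
  have P0: "?P {}" unfolding W.lin_dep_def by auto
  obtain A where A: "finite A" "maximal A ?P" using maximal_exists[of ?P, OF bnd P0] by blast
  have bas: "W.basis A" using W.max_li_is_basis[OF A(2)] .
  hence AX: "A \<subseteq> X" and li: "W.lin_indpt A" and gen: "W.gen_set A" unfolding W.basis_def by auto
  have "lin_indpt A" using li span_li_not_depend(2)[OF AX sm] by simp
  moreover have "span A = X" using gen span_li_not_depend(1)[OF AX sm] by simp
  moreover have "W.dim = card A" using W.dim_basis[OF A(1) bas] .
  ultimately show ?thesis using A(1) AX by blast
qed

lemma sdim_facts: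
  assumes "is_subspace k S"
  shows "sdim k S \<le> k" and "S \<noteq> carrier_vec k \<Longrightarrow> sdim k S < k"
    and "z \<in> S \<Longrightarrow> z \<noteq> 0\<^sub>v k \<Longrightarrow> sdim k S > 0"
    and "S \<subseteq> carrier_vec k" and "0\<^sub>v k \<in> S"
    and "S = {0\<^sub>v k} \<Longrightarrow> sdim k S = 0"
proof -
  interpret vec_space "TYPE(complex)" k .
  have X: "subspace class_ring S V" using assms unfolding is_subspace_def cspace_def by simp
  obtain b where b: "finite b" "b \<subseteq> S" "lin_indpt b" "span b = S" "vectorspace.dim class_ring (vs S) = card b"
    using subspace_basis[OF fin_dim X] by blast
  have sd: "sdim k S = card b" using b(5) unfolding sdim_def cspace_def by simp
  show SC: "S \<subseteq> carrier_vec k" using X unfolding subspace_def submodule_def by auto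
  show "0\<^sub>v k \<in> S" using X unfolding subspace_def submodule_def by auto
  have cb: "card b \<le> k" using li_le_dim[OF fin_dim] b SC dim_is_n by auto
  then show "sdim k S \<le> k" using sd by simp
  show "sdim k S < k" if "S \<noteq> carrier_vec k"
  proof (rule ccontr)
    assume "\<not> sdim k S < k"
    hence "card b \<ge> dim" using sd dim_is_n by simp
    hence "basis b" using dim_li_is_basis[OF fin_dim b(1) _ b(3)] b(2) SC by auto
    hence "span b = carrier_vec k" unfolding basis_def by simp
    thus False using b(4) that by simp
  qed
  show "sdim k S = 0" if "S = {0\<^sub>v k}"
  proof -
    have "0\<^sub>v k \<notin> b" using vs_zero_lin_dep[OF _ b(3)] b(2) SC by auto
    hence "b = {}" using b(2) that by auto
    thus ?thesis using sd by simp
  qed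
  show "sdim k S > 0" if "z \<in> S" "z \<noteq> 0\<^sub>v k"
  proof (rule ccontr)
    assume "\<not> sdim k S > 0"
    hence "b = {}" using sd b(1) by simp
    hence "S = {0\<^sub>v k}" using b(4) span_empty by simp
    thus False using that by simp
  qed
qed

lemma sdim_full: "sdim k (carrier_vec k) = k"
proof -
  interpret vec_space "TYPE(complex)" k .
  have X: "subspace class_ring (carrier_vec k) V"
    using subspace_def submodule_def
    by (metis cV span_is_subspace span_unit_vecs_is_carrier subsetI unit_vecs_carrier)
  obtain b where b: "finite b" "b \<subseteq> carrier_vec k" "lin_indpt b" "span b = carrier_vec k" "vectorspace.dim class_ring (vs (carrier_vec k)) = card b"
    using subspace_basis[OF fin_dim X] by blast
  have "basis b" unfolding basis_def using b by auto
  hence "dim = card b" using dim_basis b(1) by simp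
  thus ?thesis using b(5) dim_is_n unfolding sdim_def cspace_def by simp
qed

lemma kernel_subspace:
  fixes L :: "complex vec \<Rightarrow> complex vec"
  assumes car: "\<And>x. x \<in> carrier_vec k \<Longrightarrow> L x \<in> carrier_vec m"
  and add: "\<And>x y. x \<in> carrier_vec k \<Longrightarrow> y \<in> carrier_vec k \<Longrightarrow> L (x + y) = L x + L y"
  and sm: "\<And>c x. x \<in> carrier_vec k \<Longrightarrow> L (c \<cdot>\<^sub>v x) = c \<cdot>\<^sub>v L x"
  shows "is_subspace k {x \<in> carrier_vec k. L x = 0\<^sub>v m}"
proof -
  interpret vec_space "TYPE(complex)" k .
  have z: "L (0\<^sub>v k) = 0\<^sub>v m"
  proof -
    have "L (0\<^sub>v k) = L (0 \<cdot>\<^sub>v 0\<^sub>v k)" by simp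
    also have "\<dots> = 0 \<cdot>\<^sub>v L (0\<^sub>v k)" using sm[of "0\<^sub>v k" 0] by simp
    also have "\<dots> = 0\<^sub>v m" using car[of "0\<^sub>v k"] by auto
    finally show ?thesis .
  qed
  have "submodule class_ring {x \<in> carrier_vec k. L x = 0\<^sub>v m} V"
    by (rule submodule.intro) (use vec_module z add sm in \<open>auto simp: module_vec_simps\<close>)
  thus ?thesis unfolding is_subspace_def cspace_def subspace_def using vec_vs by simp
qed

lemma zero_subspace: "is_subspace k {0\<^sub>v k}"
proof -
  have "is_subspace k {x \<in> carrier_vec k. (\<lambda>y. y) x = 0\<^sub>v k}"
    by (rule kernel_subspace) auto
  moreover have "{x \<in> carrier_vec k. (\<lambda>y. y) x = 0\<^sub>v k} = {0\<^sub>v k}" by auto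
  ultimately show ?thesis by metis
qed

lemma vec_diff_zero: "x \<in> carrier_vec n \<Longrightarrow> y \<in> carrier_vec n \<Longrightarrow> x - y = 0\<^sub>v n \<Longrightarrow> x = (y::complex vec)"
proof (intro eq_vecI)
  fix i assume "x \<in> carrier_vec n" "y \<in> carrier_vec n" "x - y = 0\<^sub>v n" "i < dim_vec y"
  then have "(x - y) $ i = 0" by simp
  then show "x $ i = y $ i" using \<open>i < dim_vec y\<close> \<open>y \<in> carrier_vec n\<close> by simp
qed auto

lemma mat_zero_vec: "A \<in> carrier_mat nr nc \<Longrightarrow> A *\<^sub>v 0\<^sub>v nc = (0\<^sub>v nr :: complex vec)"
  by (auto intro!: eq_vecI simp: scalar_prod_def)

lemma etilde_mult: "e \<in> carrier_mat u v0 \<Longrightarrow> l < u \<Longrightarrow> x \<in> carrier_vec v0 \<Longrightarrow>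
   etilde v0 e l *\<^sub>v x = vec 1 (\<lambda>_. (e *\<^sub>v x) $ l)"
  unfolding etilde_def by (auto intro!: eq_vecI)

lemma e_zero_iff: "e \<in> carrier_mat u v0 \<Longrightarrow> x \<in> carrier_vec v0 \<Longrightarrow>
   (\<forall>l<u. etilde v0 e l *\<^sub>v x = 0\<^sub>v 1) \<longleftrightarrow> e *\<^sub>v x = 0\<^sub>v u"
proof
  assume e: "e \<in> carrier_mat u v0" and x: "x \<in> carrier_vec v0"
  {
    assume H: "\<forall>l<u. etilde v0 e l *\<^sub>v x = 0\<^sub>v 1"
    show "e *\<^sub>v x = 0\<^sub>v u"
    proof (rule eq_vecI)
      fix l assume "l < dim_vec (0\<^sub>v u :: complex vec)"
      hence l: "l < u" by simp
      have "vec 1 (\<lambda>_. (e *\<^sub>v x) $ l) = 0\<^sub>v 1" using H l etilde_mult[OF e l x] by simp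
      hence "vec 1 (\<lambda>_. (e *\<^sub>v x) $ l) $ 0 = (0\<^sub>v 1 :: complex vec) $ 0" by simp
      thus "(e *\<^sub>v x) $ l = 0\<^sub>v u $ l" using l by simp
    qed (use e in simp)
  }
  {
    assume H: "e *\<^sub>v x = 0\<^sub>v u"
    show "\<forall>l<u. etilde v0 e l *\<^sub>v x = 0\<^sub>v 1"
      using etilde_mult[OF e _ x] H by (auto intro!: eq_vecI)
  }
qed

fun G :: "complex mat \<Rightarrow> (nat \<Rightarrow> complex mat) \<Rightarrow> nat \<Rightarrow> complex vec \<Rightarrow> complex vec" where
  "G e A 0 x = e *\<^sub>v x"
| "G e A (Suc i) x = G e A i (A (Suc i) *\<^sub>v x)"

lemma G_facts:
  assumes eC: "e \<in> carrier_mat u (v 0)"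
    and AC: "\<And>p. p \<in> {1..d-1} \<Longrightarrow> A p \<in> carrier_mat (v (p-1)) (v p)"
  shows G_car: "i \<le> d - 1 \<Longrightarrow> x \<in> carrier_vec (v i) \<Longrightarrow> G e A i x \<in> carrier_vec u"
    and G_add: "i \<le> d - 1 \<Longrightarrow> x \<in> carrier_vec (v i) \<Longrightarrow> y \<in> carrier_vec (v i) \<Longrightarrow> G e A i (x + y) = G e A i x + G e A i y"
    and G_sm: "i \<le> d - 1 \<Longrightarrow> x \<in> carrier_vec (v i) \<Longrightarrow> G e A i (c \<cdot>\<^sub>v x) = c \<cdot>\<^sub>v G e A i x"
proof -
  have Ai: "A (Suc i) \<in> carrier_mat (v i) (v (Suc i))" if "Suc i \<le> d - 1" for i
    using AC[of "Suc i"] that by auto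
  show car: "i \<le> d - 1 \<Longrightarrow> x \<in> carrier_vec (v i) \<Longrightarrow> G e A i x \<in> carrier_vec u" for i x
  proof (induction i arbitrary: x)
    case 0 thus ?case using eC by simp
  next
    case (Suc i) thus ?case using Ai[of i] by simp
  qed
  show "i \<le> d - 1 \<Longrightarrow> x \<in> carrier_vec (v i) \<Longrightarrow> y \<in> carrier_vec (v i) \<Longrightarrow> G e A i (x + y) = G e A i x + G e A i y"
  proof (induction i arbitrary: x y)
    case 0 thus ?case using eC by (simp add: mult_add_distrib_mat_vec)
  next
    case (Suc i) thus ?case using Ai[of i] by (simp add: mult_add_distrib_mat_vec)
  qed
  show "i \<le> d - 1 \<Longrightarrow> x \<in> carrier_vec (v i) \<Longrightarrow> G e A i (c \<cdot>\<^sub>v x) = c \<cdot>\<^sub>v G e A i x"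
  proof (induction i arbitrary: x)
    case 0 thus ?case using eC by (simp add: mult_mat_vec)
  next
    case (Suc i) thus ?case using Ai[of i] by (simp add: mult_mat_vec)
  qed
qed

lemma zero_mat_vec: "x \<in> carrier_vec nc \<Longrightarrow> 0\<^sub>m nr nc *\<^sub>v x = (0\<^sub>v nr :: complex vec)"
  by (auto intro!: eq_vecI simp: scalar_prod_def)

lemma G_B:
  assumes eC: "e \<in> carrier_mat u (v 0)"
    and AC: "\<And>p. p \<in> {1..d-1} \<Longrightarrow> A p \<in> carrier_mat (v (p-1)) (v p)"
    and fC: "f \<in> carrier_mat (v 0) u"
    and BC: "\<And>p. p \<in> {1..d-1} \<Longrightarrow> Bq p \<in> carrier_mat (v p) (v (p-1))"
    and rel1: "d \<ge> 2 \<Longrightarrow> A 1 * Bq 1 + f * e = 0\<^sub>m (v 0) (v 0)"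
    and rel2: "\<And>p. p \<in> {1..d-2} \<Longrightarrow> A (p+1) * Bq (p+1) = Bq p * A p"
  shows "Suc k \<le> d - 1 \<Longrightarrow> x \<in> carrier_vec (v k) \<Longrightarrow> G e A k x = 0\<^sub>v u \<Longrightarrow>
     G e A (Suc k) (Bq (Suc k) *\<^sub>v x) = 0\<^sub>v u"
proof (induction k arbitrary: x)
  case 0
  have A1: "A 1 \<in> carrier_mat (v 0) (v 1)" using AC[of 1] 0 by auto
  have B1: "Bq 1 \<in> carrier_mat (v 1) (v 0)" using BC[of 1] 0 by auto
  have x: "x \<in> carrier_vec (v 0)" and ex: "e *\<^sub>v x = 0\<^sub>v u" using 0 by auto
  have r: "A 1 * Bq 1 + f * e = 0\<^sub>m (v 0) (v 0)" using rel1 0 by auto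
  have "(A 1 * Bq 1) *\<^sub>v x + (f * e) *\<^sub>v x = (A 1 * Bq 1 + f * e) *\<^sub>v x"
    using A1 B1 fC eC x by (simp add: add_mult_distrib_mat_vec[of _ "v 0" "v 0"])
  also have "\<dots> = 0\<^sub>v (v 0)" using r x zero_mat_vec by simp
  finally have h: "(A 1 * Bq 1) *\<^sub>v x + (f * e) *\<^sub>v x = 0\<^sub>v (v 0)" .
  have "(f * e) *\<^sub>v x = 0\<^sub>v (v 0)" using fC eC x ex mat_zero_vec[OF fC] by simp
  with h have "(A 1 * Bq 1) *\<^sub>v x = 0\<^sub>v (v 0)" using A1 B1 x by simp
  hence "A 1 *\<^sub>v (Bq 1 *\<^sub>v x) = 0\<^sub>v (v 0)" using A1 B1 x by simp
  thus ?case using mat_zero_vec[OF eC] by simp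
next
  case (Suc k)
  have A2: "A (Suc (Suc k)) \<in> carrier_mat (v (Suc k)) (v (Suc (Suc k)))" using AC[of "Suc (Suc k)"] Suc.prems by auto
  have B2: "Bq (Suc (Suc k)) \<in> carrier_mat (v (Suc (Suc k))) (v (Suc k))" using BC[of "Suc (Suc k)"] Suc.prems by auto
  have A1: "A (Suc k) \<in> carrier_mat (v k) (v (Suc k))" using AC[of "Suc k"] Suc.prems by auto
  have B1: "Bq (Suc k) \<in> carrier_mat (v (Suc k)) (v k)" using BC[of "Suc k"] Suc.prems by auto
  have r: "A (Suc (Suc k)) * Bq (Suc (Suc k)) = Bq (Suc k) * A (Suc k)" using rel2[of "Suc k"] Suc.prems by auto
  have x: "x \<in> carrier_vec (v (Suc k))" using Suc.prems by simp
  have "A (Suc (Suc k)) *\<^sub>v (Bq (Suc (Suc k)) *\<^sub>v x) = (A (Suc (Suc k)) * Bq (Suc (Suc k))) *\<^sub>v x"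
    using A2 B2 x by simp
  also have "\<dots> = Bq (Suc k) *\<^sub>v (A (Suc k) *\<^sub>v x)" using r A1 B1 x by simp
  finally have eq: "A (Suc (Suc k)) *\<^sub>v (Bq (Suc (Suc k)) *\<^sub>v x) = Bq (Suc k) *\<^sub>v (A (Suc k) *\<^sub>v x)" .
  have "G e A (Suc k) (Bq (Suc k) *\<^sub>v (A (Suc k) *\<^sub>v x)) = 0\<^sub>v u"
    using Suc.IH[of "A (Suc k) *\<^sub>v x"] Suc.prems A1 x by simp
  thus ?case using eq by simp
qed

lemma G_zero:
  assumes eC: "e \<in> carrier_mat u (v 0)"
    and AC: "\<And>p. p \<in> {1..d-1} \<Longrightarrow> A p \<in> carrier_mat (v (p-1)) (v p)"
    and i: "i \<le> d - 1"
  shows "G e A i (0\<^sub>v (v i)) = 0\<^sub>v u"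
proof -
  have "(0\<^sub>v (v i) :: complex vec) = 0 \<cdot>\<^sub>v 0\<^sub>v (v i)" by (auto intro!: eq_vecI)
  hence "G e A i (0\<^sub>v (v i)) = G e A i (0 \<cdot>\<^sub>v 0\<^sub>v (v i))" by simp
  also have "\<dots> = 0 \<cdot>\<^sub>v G e A i (0\<^sub>v (v i))" using G_sm[OF eC AC i] by simp
  also have "\<dots> = 0\<^sub>v u" using G_car[OF eC AC i, of "0\<^sub>v (v i)"] by auto
  finally show ?thesis .
qed

lemma G_pred: "p \<ge> 1 \<Longrightarrow> G e A p x = G e A (p - 1) (A p *\<^sub>v x)"
  by (cases p) auto

lemma ftilde_carrier: "ftilde v0 f q l \<in> carrier_mat v0 1"
  unfolding ftilde_def by auto

lemma semistable_imp_inj: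
  assumes d: "d \<ge> 1" and rep: "is_rep_F d n v u e A f B"
    and ss: "theta_semistable d n v u e A f B"
  shows "inj_on (\<lambda>x. e *\<^sub>v x) (carrier_vec (v 0)) \<and>
            (\<forall>p\<in>{1..d-1}. inj_on (\<lambda>x. A p *\<^sub>v x) (carrier_vec (v p)))"
proof -
  have eC: "e \<in> carrier_mat u (v 0)" using rep unfolding is_rep_F_def by auto
  have AC: "\<And>p. p \<in> {1..d-1} \<Longrightarrow> A p \<in> carrier_mat (v (p-1)) (v p)" using rep unfolding is_rep_F_def by auto
  have fC: "\<And>q. q \<in> {1..n-1} \<Longrightarrow> f q \<in> carrier_mat (v 0) u" using rep unfolding is_rep_F_def by auto
  have BC: "\<And>p q. p \<in> {1..d-1} \<Longrightarrow> q \<in> {1..n-1} \<Longrightarrow> B p q \<in> carrier_mat (v p) (v (p-1))"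
    using rep unfolding is_rep_F_def by auto
  have rel1: "\<And>q. q \<in> {1..n-1} \<Longrightarrow> d \<ge> 2 \<Longrightarrow> A 1 * B 1 q + f q * e = 0\<^sub>m (v 0) (v 0)"
    using rep unfolding is_rep_F_def by auto
  have rel2: "\<And>q p. q \<in> {1..n-1} \<Longrightarrow> p \<in> {1..d-2} \<Longrightarrow> A (p+1) * B (p+1) q = B p q * A p"
  proof -
    fix q p assume q: "q \<in> {1..n-1}" and p: "p \<in> {1..d-2}"
    have "d \<ge> 2" using p by auto
    thus "A (p+1) * B (p+1) q = B p q * A p" using rep q p unfolding is_rep_F_def by blast
  qed
  define K where "K i = {x \<in> carrier_vec (v i). G e A i x = 0\<^sub>v u}" for i
  have Ksub: "is_subspace (v i) (K i)" if "i < d" for i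
    unfolding K_def
    by (rule kernel_subspace) (use G_car[where d=d, OF eC AC] G_add[where d=d, OF eC AC] G_sm[where d=d, OF eC AC] that in auto)
  have subrep: "is_subrep d n v u e A f B K {0\<^sub>v 1}"
    unfolding is_subrep_def
  proof (intro conjI ballI allI impI)
    show "is_subspace (v i) (K i)" if "i < d" for i using Ksub that .
    show "is_subspace 1 {0\<^sub>v 1}" by (rule zero_subspace)
  next
    fix l x assume l: "l < u" and x: "x \<in> K 0"
    thus "etilde (v 0) e l *\<^sub>v x \<in> {0\<^sub>v 1}" using e_zero_iff[OF eC, of x] unfolding K_def by auto
  next
    fix q l y assume q: "q \<in> {1..n-1}" and "l < u" and y: "(y::complex vec) \<in> {0\<^sub>v 1}"
    have "ftilde (v 0) f q l *\<^sub>v y = 0\<^sub>v (v 0)" using y mat_zero_vec[OF ftilde_carrier] by simp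
    thus "ftilde (v 0) f q l *\<^sub>v y \<in> K 0" unfolding K_def using mat_zero_vec[OF eC] by simp
  next
    fix p x assume p: "p \<in> {1..d-1}" and x: "x \<in> K p"
    have "A p *\<^sub>v x \<in> carrier_vec (v (p-1))" using AC[OF p] x unfolding K_def by auto
    moreover have "G e A (p-1) (A p *\<^sub>v x) = 0\<^sub>v u" using x G_pred[of p e A x] p unfolding K_def by auto
    ultimately show "A p *\<^sub>v x \<in> K (p - 1)" unfolding K_def by simp
  next
    fix p q x assume p: "p \<in> {1..d-1}" and q: "q \<in> {1..n-1}" and x: "x \<in> K (p - 1)"
    have "G e A (Suc (p-1)) (B (Suc (p-1)) q *\<^sub>v x) = 0\<^sub>v u"
      by (rule G_B[where d=d and Bq="\<lambda>p. B p q" and f="f q", OF eC AC fC[OF q]]) (use BC q rel1 rel2 p x in \<open>auto simp: K_def\<close>)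
    moreover have "B p q *\<^sub>v x \<in> carrier_vec (v p)" using BC[OF p q] x unfolding K_def by auto
    ultimately show "B p q *\<^sub>v x \<in> K p" using p G_pred[of p e A] unfolding K_def by auto
  qed
  have zero: "z = 0\<^sub>v (v j)" if j: "j < d" and z: "z \<in> K j" for j z
  proof (rule ccontr)
    assume nz: "z \<noteq> 0\<^sub>v (v j)"
    have ne: "{0\<^sub>v 1} \<noteq> (carrier_vec 1 :: complex vec set)"
    proof
      assume "{0\<^sub>v 1} = (carrier_vec 1 :: complex vec set)"
      hence "vec 1 (\<lambda>_. 1) \<in> {0\<^sub>v 1 :: complex vec}" by auto
      hence "vec 1 (\<lambda>_. 1) $ 0 = (0\<^sub>v 1 :: complex vec) $ 0" by simp
      thus False by simp
    qed
    have "proper_nontrivial d v K {0\<^sub>v 1}" unfolding proper_nontrivial_def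
      using j z nz ne by auto
    hence le: "(\<Sum>i<d. sdim (v i) (K i)) \<le> (\<Sum>i<d. v i) * sdim 1 {0\<^sub>v 1}"
      using ss subrep unfolding theta_semistable_def by blast
    have "sdim 1 {0\<^sub>v 1} = 0" using sdim_facts(6)[OF zero_subspace] by simp
    hence "(\<Sum>i<d. sdim (v i) (K i)) = 0" using le by simp
    moreover have "sdim (v j) (K j) \<le> (\<Sum>i<d. sdim (v i) (K i))" by (rule member_le_sum) (use j in auto)
    moreover have "sdim (v j) (K j) > 0" using sdim_facts(3)[OF Ksub[OF j] z nz] .
    ultimately show False by simp
  qed
  have "d > 0" using d by simp
  have inj_e: "inj_on (\<lambda>x. e *\<^sub>v x) (carrier_vec (v 0))"
  proof (rule inj_onI)
    fix x y assume x: "x \<in> carrier_vec (v 0)" and y: "y \<in> carrier_vec (v 0)" and eq: "e *\<^sub>v x = e *\<^sub>v y"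
    have "e *\<^sub>v (x - y) = e *\<^sub>v x - e *\<^sub>v y" using eC x y by (simp add: mult_minus_distrib_mat_vec)
    also have "\<dots> = 0\<^sub>v u" using eq eC y by simp
    finally have "x - y \<in> K 0" unfolding K_def using x y by simp
    hence "x - y = 0\<^sub>v (v 0)" using zero[of 0] \<open>d > 0\<close> by blast
    thus "x = y" using vec_diff_zero x y by blast
  qed
  have "inj_on (\<lambda>x. A p *\<^sub>v x) (carrier_vec (v p))" if p: "p \<in> {1..d-1}" for p
  proof (rule inj_onI)
    fix x y assume x: "x \<in> carrier_vec (v p)" and y: "y \<in> carrier_vec (v p)" and eq: "A p *\<^sub>v x = A p *\<^sub>v y"
    have Ap: "A p \<in> carrier_mat (v (p-1)) (v p)" using AC[OF p] .
    have "A p *\<^sub>v (x - y) = A p *\<^sub>v x - A p *\<^sub>v y" using Ap x y by (simp add: mult_minus_distrib_mat_vec)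
    also have "\<dots> = 0\<^sub>v (v (p-1))" using eq Ap y by simp
    finally have "G e A p (x - y) = 0\<^sub>v u"
      using G_pred[of p e A "x - y"] p G_zero[where d=d, OF eC AC, of "p-1"] by auto
    hence "x - y \<in> K p" unfolding K_def using x y by simp
    hence "x - y = 0\<^sub>v (v p)" using zero[of p] p \<open>d > 0\<close> by auto
    thus "x = y" using vec_diff_zero x y by blast
  qed
  with inj_e show ?thesis by blast
qed

lemma inj_imp_stable:
  assumes rep: "is_rep_F d n v u e A f B"
    and inje: "inj_on (\<lambda>x. e *\<^sub>v x) (carrier_vec (v 0))"
    and injA: "\<forall>p\<in>{1..d-1}. inj_on (\<lambda>x. A p *\<^sub>v x) (carrier_vec (v p))"
  shows "theta_stable d n v u e A f B"
  unfolding theta_stable_def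
proof (intro allI impI, elim conjE)
  fix S Sinf assume sub: "is_subrep d n v u e A f B S Sinf" and pr: "proper_nontrivial d v S Sinf"
  have eC: "e \<in> carrier_mat u (v 0)" using rep unfolding is_rep_F_def by auto
  have AC: "\<And>p. p \<in> {1..d-1} \<Longrightarrow> A p \<in> carrier_mat (v (p-1)) (v p)" using rep unfolding is_rep_F_def by auto
  have Ssub: "\<And>i. i < d \<Longrightarrow> is_subspace (v i) (S i)" and Isub: "is_subspace 1 Sinf"
    and eS: "\<forall>l<u. \<forall>x\<in>S 0. etilde (v 0) e l *\<^sub>v x \<in> Sinf"
    and AS: "\<forall>p\<in>{1..d-1}. \<forall>x\<in>S p. A p *\<^sub>v x \<in> S (p-1)"
    using sub unfolding is_subrep_def by auto
  have le1: "sdim 1 Sinf \<le> 1" using sdim_facts(1)[OF Isub] .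
  show "(\<Sum>i<d. sdim (v i) (S i)) < (\<Sum>i<d. v i) * sdim 1 Sinf"
  proof (cases "sdim 1 Sinf = 0")
    case True
    have I0: "Sinf = {0\<^sub>v 1}"
    proof -
      have "z = 0\<^sub>v 1" if z: "z \<in> Sinf" for z
      proof (rule ccontr)
        assume "z \<noteq> 0\<^sub>v 1"
        hence "sdim 1 Sinf > 0" using sdim_facts(3)[OF Isub z] by blast
        thus False using True by simp
      qed
      thus ?thesis using sdim_facts(5)[OF Isub] by blast
    qed
    have "i < d \<longrightarrow> S i = {0\<^sub>v (v i)}" for i
    proof (induction i)
      case 0
      show ?case
      proof
        assume "0 < d"
        have "x = 0\<^sub>v (v 0)" if x: "x \<in> S 0" for x
        proof -
          have xc: "x \<in> carrier_vec (v 0)" using sdim_facts(4)[OF Ssub[OF \<open>0 < d\<close>]] x by blast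
          have "\<forall>l<u. etilde (v 0) e l *\<^sub>v x = 0\<^sub>v 1"
          proof (intro allI impI)
            fix l assume "l < u"
            hence "etilde (v 0) e l *\<^sub>v x \<in> Sinf" using eS x by blast
            thus "etilde (v 0) e l *\<^sub>v x = 0\<^sub>v 1" using I0 by blast
          qed
          hence "e *\<^sub>v x = 0\<^sub>v u" using e_zero_iff[OF eC xc] by blast
          also have "\<dots> = e *\<^sub>v 0\<^sub>v (v 0)" by (rule mat_zero_vec[OF eC, symmetric])
          finally have "e *\<^sub>v x = e *\<^sub>v 0\<^sub>v (v 0)" .
          from inj_onD[of "\<lambda>x. e *\<^sub>v x" "carrier_vec (v 0)" x "0\<^sub>v (v 0)", OF inje this xc zero_carrier_vec]
          show ?thesis .
        qed
        hence "S 0 \<subseteq> {0\<^sub>v (v 0)}" by blast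
        moreover have "0\<^sub>v (v 0) \<in> S 0" using sdim_facts(5)[OF Ssub[OF \<open>0 < d\<close>]] .
        ultimately show "S 0 = {0\<^sub>v (v 0)}" by blast
      qed
    next
      case (Suc i)
      show ?case
      proof
        assume sd: "Suc i < d"
        have p: "Suc i \<in> {1..d-1}" using sd by auto
        have Si: "S i = {0\<^sub>v (v i)}" using Suc sd by auto
        have "x = 0\<^sub>v (v (Suc i))" if x: "x \<in> S (Suc i)" for x
        proof -
          have xc: "x \<in> carrier_vec (v (Suc i))" using sdim_facts(4)[OF Ssub[OF sd]] x by blast
          have "A (Suc i) *\<^sub>v x \<in> S (Suc i - 1)" using AS p x by blast
          hence "A (Suc i) *\<^sub>v x = 0\<^sub>v (v i)" using Si by simp
          also have "\<dots> = A (Suc i) *\<^sub>v 0\<^sub>v (v (Suc i))" using mat_zero_vec AC[OF p] by simp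
          moreover have "inj_on (\<lambda>x. A (Suc i) *\<^sub>v x) (carrier_vec (v (Suc i)))" using injA p by blast
          ultimately show ?thesis
            using inj_onD[of "\<lambda>x. A (Suc i) *\<^sub>v x" "carrier_vec (v (Suc i))" x "0\<^sub>v (v (Suc i))"] xc by simp
        qed
        hence "S (Suc i) \<subseteq> {0\<^sub>v (v (Suc i))}" by blast
        moreover have "0\<^sub>v (v (Suc i)) \<in> S (Suc i)" using sdim_facts(5)[OF Ssub[OF sd]] .
        ultimately show "S (Suc i) = {0\<^sub>v (v (Suc i))}" by blast
      qed
    qed
    hence "\<forall>i<d. S i = {0\<^sub>v (v i)}" by blast
    hence False using pr I0 unfolding proper_nontrivial_def by blast
    thus ?thesis ..
  next
    case False
    hence s1: "sdim 1 Sinf = 1" using le1 by simp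
    have I1: "Sinf = carrier_vec 1"
      using sdim_facts(2)[OF Isub] s1 by (cases "Sinf = carrier_vec 1") auto
    then obtain j where j: "j < d" "S j \<noteq> carrier_vec (v j)"
      using pr unfolding proper_nontrivial_def by auto
    have "(\<Sum>i<d. sdim (v i) (S i)) < (\<Sum>i<d. v i)"
    proof (rule sum_strict_mono_ex1)
      show "\<forall>x\<in>{..<d}. sdim (v x) (S x) \<le> v x" using sdim_facts(1)[OF Ssub] by auto
      show "\<exists>a\<in>{..<d}. sdim (v a) (S a) < v a" using sdim_facts(2)[OF Ssub[OF j(1)] j(2)] j(1) by auto
    qed auto
    thus ?thesis using s1 by simp
  qed
qed

theorem lemma7p2:
  fixes d n u :: nat and v :: "nat \<Rightarrow> nat"
    and e :: "complex mat" and A f :: "nat \<Rightarrow> complex mat"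
    and B :: "nat \<Rightarrow> nat \<Rightarrow> complex mat"
  assumes "d \<ge> 1" and "n \<ge> 1" and "u > d"
    and "u > v 0" and "\<forall>i. i + 1 < d \<longrightarrow> v i > v (i + 1)" and "v (d - 1) > 0"
    and "is_rep_F d n v u e A f B"
  shows "(theta_semistable d n v u e A f B \<longleftrightarrow> theta_stable d n v u e A f B) \<and>
         (theta_semistable d n v u e A f B \<longleftrightarrow>
            inj_on (\<lambda>x. e *\<^sub>v x) (carrier_vec (v 0)) \<and>
            (\<forall>p\<in>{1..d-1}. inj_on (\<lambda>x. A p *\<^sub>v x) (carrier_vec (v p))))"
proof -
  have st_ss: "theta_stable d n v u e A f B \<Longrightarrow> theta_semistable d n v u e A f B"
    unfolding theta_stable_def theta_semistable_def by (meson less_imp_le)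
  show ?thesis
    using semistable_imp_inj[OF assms(1) assms(7)] inj_imp_stable[OF assms(7)] st_ss by blast
qed
end
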